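(* Let $n\ge 2$, fix $\beta\in\partial\mathbb{D}$ and $\{\alpha_j\}_{j=0}^{n-2}\in\mathbb{D}^{n-1}$. Let $C_n(z)=C_n(z;\{\alpha_j\}_{j=0}^{n-2},\beta)$ and $S_n(z)=S_n(z;\{\alpha_j\}_{j=0}^{n-2},\beta)$, and let $C_{n-1}(z)=C_{n-1}(z;\{\alpha_{j+1}\}_{j=0}^{n-3},\beta)$ and $S_{n-1}(z)=S_{n-1}(z;\{\alpha_{j+1}\}_{j=0}^{n-3},\beta)$ be the corresponding functions with $\alpha_0$ removed. Then \[ C_n(z)=z\bigl(C_{n-1}(z)-\alpha_0S_{n-1}(z)\bigr),\qquad S_n(z)=-\bar\alpha_0C_{n-1}(z)+S_{n-1}(z). \]
   Context: For Verblunsky coefficients $\alpha_0,\alpha_1,\dots\in\mathbb{D}$ the monic orthogonal polynomials on the unit circle satisfy $\Phi_0=1$, $\Phi_{k+1}(z)=z\Phi_k(z)-\bar\alpha_k\Phi_k^*(z)$ with $\Phi_k^*(z)=z^k\overline{\Phi_k(1/\bar z)}$; the second kind polynomials $\Psi_k$ satisfy the same recursion with each $\alpha_j$ replaced by $-\alpha_j$. For $m\ge1$ and $\beta\in\partial\mathbb{D}$, $P_m(z;\{\alpha_j\}_{j=0}^{m-2},\beta)=z\Phi_{m-1}(z)-\bar\beta\Phi_{m-1}^*(z)$ and $Q_m(z;\{\alpha_j\}_{j=0}^{m-2},\beta)=z\Psi_{m-1}(z)+\bar\beta\Psi_{m-1}^*(z)$ (with $\Phi_{m-1},\Psi_{m-1}$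 built from $\alpha_0,\dots,\alpha_{m-2}$), and $C_m=\tfrac12(P_m+Q_m)$, $S_m=\tfrac12(P_m-Q_m)$. *)

theory Defs
  imports "HOL-Analysis.Analysis" "HOL-Computational_Algebra.Polynomial"
begin

text \<open>Reversed polynomial of degree (at most) k:
  p^*(z) = z^k * conj (p (1 / conj z)), i.e. coefficients conjugated and reversed w.r.t. k.\<close>
definition pstar :: "nat \<Rightarrow> complex poly \<Rightarrow> complex poly" where
  "pstar k p = Poly (map (\<lambda>i. cnj (coeff p (k - i))) [0..<Suc k])"

text \<open>Monic OPUC Phi_k built from Verblunsky coefficients a 0, ..., a (k-1).\<close>
fun Phi :: "(nat \<Rightarrow> complex) \<Rightarrow> nat \<Rightarrow> complex poly" where
  "Phi a 0 = 1"
| "Phi a (Suc k) = pCons 0 (Phi a k) - smult (cnj (a k)) (pstar k (Phi a k))"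

definition Psi :: "(nat \<Rightarrow> complex) \<Rightarrow> nat \<Rightarrow> complex poly" where
  "Psi a k = Phi (\<lambda>j. - a j) k"

definition Ppara :: "nat \<Rightarrow> (nat \<Rightarrow> complex) \<Rightarrow> complex \<Rightarrow> complex poly" where
  "Ppara m a \<beta> = pCons 0 (Phi a (m - 1)) - smult (cnj \<beta>) (pstar (m - 1) (Phi a (m - 1)))"

definition Qpara :: "nat \<Rightarrow> (nat \<Rightarrow> complex) \<Rightarrow> complex \<Rightarrow> complex poly" where
  "Qpara m a \<beta> = pCons 0 (Psi a (m - 1)) + smult (cnj \<beta>) (pstar (m - 1) (Psi a (m - 1)))"

definition Cpara :: "nat \<Rightarrow> (nat \<Rightarrow> complex) \<Rightarrow> complex \<Rightarrow> complex poly" where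
  "Cpara m a \<beta> = smult (1/2) (Ppara m a \<beta> + Qpara m a \<beta>)"

definition Spara :: "nat \<Rightarrow> (nat \<Rightarrow> complex) \<Rightarrow> complex \<Rightarrow> complex poly" where
  "Spara m a \<beta> = smult (1/2) (Ppara m a \<beta> - Qpara m a \<beta>)"

end

theory Submission
  imports Defs
begin

lemma coeff_pstar: "coeff (pstar k p) i = (if i \<le> k then cnj (coeff p (k-i)) else 0)"
  unfolding pstar_def by (auto simp: nth_default_def simp del: upt_Suc)

lemma pstar_diff: "pstar k (p - smult c q) = pstar k p - smult (cnj c) (pstar k q)"
  by (rule poly_eqI) (simp add: coeff_pstar)

lemma degree_pstar: "degree (pstar k p) \<le> k"
  by (rule degree_le) (simp add: coeff_pstar)

lemma pstar_pCons: "degree p \<le> k \<Longrightarrow> pstar (Suc k) (pCons 0 p) = pstar k p"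
  by (rule poly_eqI) (auto simp: coeff_pstar coeff_pCons Suc_diff_le split: nat.split)

lemma pstar_pstar: "degree p \<le> k \<Longrightarrow> pstar (Suc k) (pstar k p) = pCons 0 p"
proof (rule poly_eqI)
  fix i assume d: "degree p \<le> k"
  show "coeff (pstar (Suc k) (pstar k p)) i = coeff (pCons 0 p) i"
  proof (cases i)
    case 0 then show ?thesis by (simp add: coeff_pstar)
  next
    case (Suc j)
    then show ?thesis using d
      by (auto simp: coeff_pstar coeff_eq_0 Suc_diff_le)
  qed
qed

lemma degree_Phi: "degree (Phi a k) \<le> k"
proof (induction k)
  case 0 then show ?case by simp
next
  case (Suc k)
  have "degree (pCons 0 (Phi a k)) \<le> Suc k"
    using Suc by (metis degree_pCons_le le_trans Suc_le_mono)
  moreover have "degree (smult (cnj (a k)) (pstar k (Phi a k))) \<le> Suc k"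
    using degree_pstar[of k "Phi a k"] degree_smult_le le_trans by (metis le_SucI)
  ultimately show ?case by (simp add: degree_diff_le)
qed

lemma pstar_Phi_Suc:
  "pstar (Suc k) (Phi a (Suc k)) = pstar k (Phi a k) - smult (a k) (pCons 0 (Phi a k))"
  using degree_Phi[of a k]
  by (simp add: pstar_diff pstar_pCons pstar_pstar)

fun st :: "(nat \<Rightarrow> complex) \<Rightarrow> complex \<Rightarrow> complex \<times> complex \<Rightarrow> nat \<Rightarrow> complex \<times> complex" where
  "st a z w 0 = w"
| "st a z w (Suc k) = (z * fst (st a z w k) - cnj (a k) * snd (st a z w k),
                       snd (st a z w k) - a k * z * fst (st a z w k))"

lemma phi_st: "(poly (Phi a k) z, poly (pstar k (Phi a k)) z) = st a z (1,1) k"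
proof (induction k)
  case 0 then show ?case by (simp add: pstar_def)
next
  case (Suc k)
  have e1: "poly (Phi a k) z = fst (st a z (1,1) k)" and e2: "poly (pstar k (Phi a k)) z = snd (st a z (1,1) k)"
    using Suc by (metis fst_conv, metis snd_conv)
  have "pstar (Suc k) (Phi a (Suc k)) = pstar k (Phi a k) - smult (a k) (pCons 0 (Phi a k))"
    by (rule pstar_Phi_Suc)
  then show ?case
    by (simp only: st.simps) (simp add: e1 e2 algebra_simps)
qed

lemma st_neg: "st (\<lambda>j. - a j) z (p,q) k = (fst (st a z (p,-q) k), - snd (st a z (p,-q) k))"
  by (induction k) (auto simp: algebra_simps)

lemma psi_st: "(poly (Psi a k) z, - poly (pstar k (Psi a k)) z) = st a z (1,-1) k"
proof -
  have "(poly (Psi a k) z, poly (pstar k (Psi a k)) z) = st (\<lambda>j. - a j) z (1,1) k"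
    unfolding Psi_def by (rule phi_st)
  then show ?thesis by (simp add: st_neg prod_eq_iff)
qed

lemma st_lin: "st a z (p,q) k = (p * fst (st a z (1,0) k) + q * fst (st a z (0,1) k),
                               p * snd (st a z (1,0) k) + q * snd (st a z (0,1) k))"
  by (induction k) (auto simp: algebra_simps)

lemma st_shift: "st a z w (Suc k) = st (\<lambda>j. a (Suc j)) z (z * fst w - cnj (a 0) * snd w, snd w - a 0 * z * fst w) k"
  by (induction k) auto

theorem theorem4p2:
  fixes n :: nat and \<alpha> :: "nat \<Rightarrow> complex" and \<beta> z :: complex
  assumes "n \<ge> 2"
    and "norm \<beta> = 1"
    and "\<forall>j \<le> n - 2. norm (\<alpha> j) < 1"
  shows "poly (Cpara n \<alpha> \<beta>) z
           = z * (poly (Cpara (n - 1) (\<lambda>j. \<alpha> (Suc j)) \<beta>) z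
                  - \<alpha> 0 * poly (Spara (n - 1) (\<lambda>j. \<alpha> (Suc j)) \<beta>) z)
       \<and> poly (Spara n \<alpha> \<beta>) z
           = - cnj (\<alpha> 0) * poly (Cpara (n - 1) (\<lambda>j. \<alpha> (Suc j)) \<beta>) z
             + poly (Spara (n - 1) (\<lambda>j. \<alpha> (Suc j)) \<beta>) z"
proof -
  obtain k where n: "n = Suc (Suc k)" using assms(1) by (metis add_2_eq_Suc le_Suc_ex)
  define b where "b = (\<lambda>j. \<alpha> (Suc j))"
  define A where "A = fst (st b z (1,0) k)"
  define B where "B = fst (st b z (0,1) k)"
  define C where "C = snd (st b z (1,0) k)"
  define D where "D = snd (st b z (0,1) k)"
  have L: "st b z (p,q) k = (p*A+q*B, p*C+q*D)" for p q
    unfolding A_def B_def C_def D_def by (rule st_lin)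
  have LS: "st \<alpha> z (p,q) (Suc k) = ((z*p - cnj (\<alpha> 0)*q)*A + (q - \<alpha> 0*z*p)*B,
                                      (z*p - cnj (\<alpha> 0)*q)*C + (q - \<alpha> 0*z*p)*D)" for p q
    using st_shift[of \<alpha> z "(p,q)" k] L unfolding b_def by simp
  have p1: "poly (Phi \<alpha> (Suc k)) z = fst (st \<alpha> z (1,1) (Suc k))"
       "poly (pstar (Suc k) (Phi \<alpha> (Suc k))) z = snd (st \<alpha> z (1,1) (Suc k))"
    using phi_st[of \<alpha> "Suc k" z] by (metis fst_conv, metis snd_conv)
  have p2: "poly (Psi \<alpha> (Suc k)) z = fst (st \<alpha> z (1,-1) (Suc k))"
       "poly (pstar (Suc k) (Psi \<alpha> (Suc k))) z = - snd (st \<alpha> z (1,-1) (Suc k))"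
    using psi_st[of \<alpha> "Suc k" z] by (metis fst_conv, metis minus_minus snd_conv)
  have p3: "poly (Phi b k) z = fst (st b z (1,1) k)"
       "poly (pstar k (Phi b k)) z = snd (st b z (1,1) k)"
    using phi_st[of b k z] by (metis fst_conv, metis snd_conv)
  have p4: "poly (Psi b k) z = fst (st b z (1,-1) k)"
       "poly (pstar k (Psi b k)) z = - snd (st b z (1,-1) k)"
    using psi_st[of b k z] by (metis fst_conv, metis minus_minus snd_conv)
  show ?thesis
    unfolding n b_def[symmetric]
    apply (simp only: Cpara_def Spara_def Ppara_def Qpara_def diff_Suc_1 poly_smult poly_add poly_diff poly_pCons p1 p2 p3 p4 LS L)
    apply (simp add: algebra_simps)
    done
qed

end
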